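(* Let $\{P^{[s,t]}_{ij,k}\}$, with initial point $x^{(0)}\in S$, be a discrete time quadratic stochastic process of type (A) or of type (B). Suppose there exist $k_0\in\mathbb{N}$ and a sequence $(\lambda_n)_{n\ge1}$ with $0<\lambda_n<1$, satisfying $\sum_n\lambda_n=\infty$ and $\sum_{j=1}^n\frac{\prod_{k=1}^n(1-\lambda_k)}{1-\lambda_j}\to0$ as $n\to\infty$, such that $P^{[n-1,n]}_{ij,k_0}\ge\lambda_n$ for all $i,j\in\mathbb{N}$ and all $n\ge1$. Then the q.s.p. satisfies the ergodic principle, i.e. $\lim_{n\to\infty}|P^{[m,n]}_{ij,k}-P^{[m,n]}_{uv,k}|=0$ for all $i,j,u,v,k,m$.
   Context: $\mathbb{N}=\{1,2,\dots\}$; times are nonnegative integers. $\ell^1$ is the space of real sequences $x=(x_n)_{n\in\mathbb{N}}$ with $\|x\|_1=\sum_n|x_n|<\infty$, and $S=\{x\in\ell^1:x_n\ge0,\ \|x\|_1=1\}$. A discrete time quadratic stochastic process (q.s.p.) consists of an initial point $x^{(0)}\in S$ and numbers $P^{[s,t]}_{ij,k}$ ($i,j,k\in\mathbb{N}$; $s,t$ nonnegative integers with $t-s\ge1$) such that for all $s,t$: (1) $P^{[s,t]}_{ij,k}=P^{[s,t]}_{ji,k}$; (2) $P^{[s,t]}_{ij,k}\ge0$ and $\sum_{k}P^{[s,t]}_{ij,k}=1$; and (3) one of the following holds for all $s<r<t$: type (A): $P^{[s,t]}_{ij,k}=\sum_{m,l}P^{[s,r]}_{ij,m}P^{[r,t]}_{ml,k}x^{(r)}_l$;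 type (B): $P^{[s,t]}_{ij,k}=\sum_{m,l,g,h}P^{[s,r]}_{im,l}P^{[s,r]}_{jg,h}P^{[r,t]}_{lh,k}x^{(s)}_mx^{(s)}_g$. Here for $r\ge1$, $x^{(r)}_k=\sum_{i,j}P^{[0,r]}_{ij,k}x^{(0)}_ix^{(0)}_j$. *)

theory Defs
  imports "HOL-Analysis.Analysis"
begin

text \<open>Indices range over the positive naturals {1..}; times over nat.
  P s t i j k stands for P^{[s,t]}_{ij,k}; x0 k for x^{(0)}_k.\<close>

definition Npos :: "nat set" where "Npos = {1..}"

definition in_S :: "(nat \<Rightarrow> real) \<Rightarrow> bool" where
  "in_S x \<longleftrightarrow> (\<forall>n\<in>Npos. x n \<ge> 0) \<and> (x has_sum 1) Npos"

definition qsp_state ::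
  "(nat \<Rightarrow> nat \<Rightarrow> nat \<Rightarrow> nat \<Rightarrow> nat \<Rightarrow> real) \<Rightarrow> (nat \<Rightarrow> real) \<Rightarrow> nat \<Rightarrow> nat \<Rightarrow> real" where
  "qsp_state P x0 r k =
     (if r = 0 then x0 k
      else (\<Sum>\<^sub>\<infinity>(i,j)\<in>Npos \<times> Npos. P 0 r i j k * x0 i * x0 j))"

definition qsp_basic ::
  "(nat \<Rightarrow> nat \<Rightarrow> nat \<Rightarrow> nat \<Rightarrow> nat \<Rightarrow> real) \<Rightarrow> (nat \<Rightarrow> real) \<Rightarrow> bool" where
  "qsp_basic P x0 \<longleftrightarrow> in_S x0 \<and>
     (\<forall>s t. s < t \<longrightarrow> (\<forall>i\<in>Npos. \<forall>j\<in>Npos.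
        (\<forall>k\<in>Npos. P s t i j k = P s t j i k \<and> P s t i j k \<ge> 0) \<and>
        ((\<lambda>k. P s t i j k) has_sum 1) Npos))"

definition qsp_typeA ::
  "(nat \<Rightarrow> nat \<Rightarrow> nat \<Rightarrow> nat \<Rightarrow> nat \<Rightarrow> real) \<Rightarrow> (nat \<Rightarrow> real) \<Rightarrow> bool" where
  "qsp_typeA P x0 \<longleftrightarrow> qsp_basic P x0 \<and>
     (\<forall>s r t. s < r \<and> r < t \<longrightarrow> (\<forall>i\<in>Npos. \<forall>j\<in>Npos. \<forall>k\<in>Npos.
        ((\<lambda>(m,l). P s r i j m * P r t m l k * qsp_state P x0 r l) has_sum P s t i j k)
          (Npos \<times> Npos)))"

definition qsp_typeB ::
  "(nat \<Rightarrow> nat \<Rightarrow> nat \<Rightarrow> nat \<Rightarrow> nat \<Rightarrow> real) \<Rightarrow> (nat \<Rightarrow> real) \<Rightarrow> bool" where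
  "qsp_typeB P x0 \<longleftrightarrow> qsp_basic P x0 \<and>
     (\<forall>s r t. s < r \<and> r < t \<longrightarrow> (\<forall>i\<in>Npos. \<forall>j\<in>Npos. \<forall>k\<in>Npos.
        ((\<lambda>(m,l,g,h). P s r i m l * P s r j g h * P r t l h k
              * qsp_state P x0 s m * qsp_state P x0 s g)
          has_sum P s t i j k) (Npos \<times> Npos \<times> Npos \<times> Npos)))"

definition ergodic_principle ::
  "(nat \<Rightarrow> nat \<Rightarrow> nat \<Rightarrow> nat \<Rightarrow> nat \<Rightarrow> real) \<Rightarrow> bool" where
  "ergodic_principle P \<longleftrightarrow>
     (\<forall>i\<in>Npos. \<forall>j\<in>Npos. \<forall>u\<in>Npos. \<forall>v\<in>Npos. \<forall>k\<in>Npos. \<forall>m.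
        (\<lambda>n. \<bar>P m n i j k - P m n u v k\<bar>) \<longlonglongrightarrow> 0)"

end

theory Submission
  imports Defs
begin


lemma tonelli:
  fixes f :: "'a \<times> 'b \<Rightarrow> real"
  assumes nn: "\<And>a b. a \<in> A \<Longrightarrow> b \<in> B \<Longrightarrow> 0 \<le> f (a,b)"
    and inner: "\<And>a. a \<in> A \<Longrightarrow> ((\<lambda>b. f (a,b)) has_sum g a) B"
    and outer: "(g has_sum S) A"
  shows "(f has_sum S) (A \<times> B)"
proof (rule has_sum_SigmaI[where B="\<lambda>_. B", OF inner outer])
  have g0: "0 \<le> g a" if "a \<in> A" for a
    using has_sum_nonneg[OF inner[OF that]] nn that by blast
  have c1: "\<forall>a\<in>A. (\<lambda>b. norm (f (a,b))) summable_on B"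
  proof
    fix a assume a: "a \<in> A"
    have "(\<lambda>b. f (a,b)) summable_on B" using inner[OF a] has_sum_imp_summable by blast
    then show "(\<lambda>b. norm (f (a,b))) summable_on B"
      by (rule summable_on_cong[THEN iffD1, rotated]) (use nn a in auto)
  qed
  have "g summable_on A" using outer has_sum_imp_summable by blast
  moreover have "g a = norm (infsum (\<lambda>b. norm (f (a, b))) B)" if a: "a \<in> A" for a
  proof -
    have "infsum (\<lambda>b. norm (f (a, b))) B = infsum (\<lambda>b. f (a, b)) B"
      by (rule infsum_cong) (use nn a in auto)
    also have "\<dots> = g a" using inner[OF a] infsumI by blast
    finally show ?thesis using g0[OF a] by simp
  qed
  ultimately have c2: "(\<lambda>a. norm (infsum (\<lambda>b. norm (f (a, b))) B)) summable_on A"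
    by (rule summable_on_cong[THEN iffD1, rotated]) auto
  have "(\<lambda>x. norm (f x)) summable_on Sigma A (\<lambda>_. B)"
    using Infinite_Sum.abs_summable_on_Sigma_iff[where f=f and A=A and B="\<lambda>_. B"] c1 c2 by blast
  then show "f summable_on Sigma A (\<lambda>_. B)"
    using summable_on_iff_abs_summable_on_real by blast
qed

lemma basic_bounds:
  assumes "qsp_basic P x0" "s < t" "i \<in> Npos" "j \<in> Npos" "k \<in> Npos"
  shows "0 \<le> P s t i j k" "P s t i j k \<le> 1" "P s t i j k = P s t j i k"
    "((\<lambda>k. P s t i j k) has_sum 1) Npos"
proof -
  have h: "((\<lambda>k. P s t i j k) has_sum 1) Npos" and nn: "\<forall>k\<in>Npos. 0 \<le> P s t i j k"
    and sy: "\<forall>k\<in>Npos. P s t i j k = P s t j i k"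
  proof -
    have q: "\<forall>s t. s < t \<longrightarrow> (\<forall>i\<in>Npos. \<forall>j\<in>Npos.
        (\<forall>k\<in>Npos. P s t i j k = P s t j i k \<and> P s t i j k \<ge> 0) \<and>
        ((\<lambda>k. P s t i j k) has_sum 1) Npos)"
      using assms(1) unfolding qsp_basic_def by (rule conjunct2)
    have "(\<forall>k\<in>Npos. P s t i j k = P s t j i k \<and> P s t i j k \<ge> 0) \<and>
        ((\<lambda>k. P s t i j k) has_sum 1) Npos"
      using q assms(2,3,4) by blast
    then show "((\<lambda>k. P s t i j k) has_sum 1) Npos" "\<forall>k\<in>Npos. 0 \<le> P s t i j k"
      "\<forall>k\<in>Npos. P s t i j k = P s t j i k" by blast+
  qed
  show "0 \<le> P s t i j k" "P s t i j k = P s t j i k" "((\<lambda>k. P s t i j k) has_sum 1) Npos"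
    using nn sy h assms(5) by blast+
  have "sum (\<lambda>k. P s t i j k) {k} \<le> 1"
    by (rule finite_sum_le_has_sum[OF h]) (use assms(5) nn in blast)+
  then show "P s t i j k \<le> 1" by simp
qed

lemma state_prob:
  assumes "qsp_basic P x0"
  shows "(\<forall>k\<in>Npos. 0 \<le> qsp_state P x0 r k) \<and> (qsp_state P x0 r has_sum 1) Npos"
proof (cases "r = 0")
  case True
  have e: "qsp_state P x0 r = x0" using True by (simp add: qsp_state_def fun_eq_iff)
  have "in_S x0" using assms unfolding qsp_basic_def by (rule conjunct1)
  then show ?thesis unfolding e in_S_def by blast
next
  case False
  have x0: "\<forall>n\<in>Npos. 0 \<le> x0 n" "(x0 has_sum 1) Npos"
  proof -
    have "in_S x0" using assms unfolding qsp_basic_def by (rule conjunct1)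
    then show "\<forall>n\<in>Npos. 0 \<le> x0 n" "(x0 has_sum 1) Npos" unfolding in_S_def by blast+
  qed
  have pair: "((\<lambda>(i,j). x0 i * x0 j) has_sum 1) (Npos \<times> Npos)"
  proof (rule tonelli[where g=x0])
    show "((\<lambda>b. case (a, b) of (i, j) \<Rightarrow> x0 i * x0 j) has_sum x0 a) Npos" for a
      using has_sum_cmult_right[OF x0(2), of "x0 a"] by simp
  qed (use x0 in auto)
  have r0: "0 < r" using False by simp
  have Tb: "0 \<le> P 0 r i j k * x0 i * x0 j \<and> P 0 r i j k * x0 i * x0 j \<le> x0 i * x0 j"
    if ijk: "i \<in> Npos" "j \<in> Npos" "k \<in> Npos" for i j k
  proof -
    have p0: "0 \<le> P 0 r i j k" and p1: "P 0 r i j k \<le> 1"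
      using basic_bounds(1,2)[OF assms r0 ijk] by auto
    have c: "0 \<le> x0 i * x0 j" using x0(1) ijk by simp
    have "P 0 r i j k * (x0 i * x0 j) \<le> x0 i * x0 j" by (rule mult_left_le_one_le[OF c p0 p1])
    moreover have "0 \<le> P 0 r i j k * (x0 i * x0 j)" using p0 c by simp
    ultimately show ?thesis by (simp add: mult.assoc)
  qed
  define T where "T = (\<lambda>(y::nat\<times>nat,k::nat). P 0 r (fst y) (snd y) k * x0 (fst y) * x0 (snd y))"
  have Tnn: "0 \<le> T (y,k) \<and> T (y,k) \<le> (case y of (i,j) \<Rightarrow> x0 i * x0 j)"
    if "y \<in> Npos \<times> Npos" "k \<in> Npos" for y k
    using Tb[of "fst y" "snd y" k] that unfolding T_def by (auto simp: case_prod_unfold)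
  have T: "(T has_sum 1) ((Npos \<times> Npos) \<times> Npos)"
  proof (rule tonelli[where g="\<lambda>(i,j). x0 i * x0 j", OF _ _ pair])
    fix a b assume "a \<in> Npos \<times> Npos" "b \<in> Npos"
    then show "0 \<le> T (a,b)" using Tnn by blast
  next
    fix a assume a: "a \<in> Npos \<times> Npos"
    obtain i j where ij: "a = (i,j)" by force
    have "((\<lambda>k. P 0 r i j k * x0 i * x0 j) has_sum 1 * x0 i * x0 j) Npos"
      by (intro has_sum_cmult_left basic_bounds(4)[OF assms r0]) (use a ij in auto)
    then show "((\<lambda>b. T (a, b)) has_sum (case a of (i, j) \<Rightarrow> x0 i * x0 j)) Npos"
      unfolding T_def ij by simp
  qed
  have T2: "((\<lambda>(k,y). T (y,k)) has_sum 1) (Npos \<times> (Npos \<times> Npos))"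
    using T has_sum_swap by blast
  have inner: "((\<lambda>y. T (y,k)) has_sum qsp_state P x0 r k) (Npos \<times> Npos)" if k: "k \<in> Npos" for k
  proof -
    have "(\<lambda>y. T (y,k)) summable_on (Npos \<times> Npos)"
    proof (rule summable_on_comparison_test[OF has_sum_imp_summable[OF pair]])
      fix y assume y: "y \<in> Npos \<times> Npos"
      then show "T (y,k) \<le> (case y of (i, j) \<Rightarrow> x0 i * x0 j)" "0 \<le> T (y,k)"
        using Tnn k by blast+
    qed
    moreover have "qsp_state P x0 r k = infsum (\<lambda>y. T (y,k)) (Npos \<times> Npos)"
      unfolding qsp_state_def T_def using False by (simp add: case_prod_unfold)
    ultimately show ?thesis by simp
  qed
  have "(qsp_state P x0 r has_sum 1) Npos"
  proof (rule has_sum_Sigma'[where f="\<lambda>p. T (snd p, fst p)" and b="qsp_state P x0 r"])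
    show "((\<lambda>p. T (snd p, fst p)) has_sum 1) (Npos \<times> (Npos \<times> Npos))"
      using T2 by (simp add: case_prod_unfold)
    show "((\<lambda>y. T (snd (x, y), fst (x, y))) has_sum qsp_state P x0 r x) (Npos \<times> Npos)"
      if "x \<in> Npos" for x using inner[OF that] by simp
  qed
  moreover have "0 \<le> qsp_state P x0 r k" if "k \<in> Npos" for k
    by (rule has_sum_nonneg[OF inner[OF that]]) (use Tnn that in blast)
  ultimately show ?thesis by blast
qed



lemma has_sum_diff':
  fixes f g :: "'a \<Rightarrow> real"
  assumes "(f has_sum a) A" "(g has_sum b) A"
  shows "((\<lambda>x. f x - g x) has_sum (a - b)) A"
  using has_sum_add[OF assms(1) has_sum_uminusI[OF assms(2)]] by simp

lemma contract:
  fixes w w' mu G :: "'a \<Rightarrow> real"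
  assumes mu: "\<And>c. c \<in> I \<Longrightarrow> 0 \<le> mu c \<and> mu c \<le> w c \<and> mu c \<le> w' c"
    and hw: "(w has_sum S) I" and hw': "(w' has_sum S) I" and hmu: "(mu has_sum Sm) I"
    and hA: "((\<lambda>c. w c * G c) has_sum A) I" and hA': "((\<lambda>c. w' c * G c) has_sum A') I"
    and D: "\<And>c c'. c \<in> I \<Longrightarrow> c' \<in> I \<Longrightarrow> G c - G c' \<le> D"
    and G0: "\<And>c. c \<in> I \<Longrightarrow> 0 \<le> G c" and G1: "\<And>c. c \<in> I \<Longrightarrow> G c \<le> 1"
    and ne: "I \<noteq> {}"
  shows "A - A' \<le> (S - Sm) * D"
proof -
  have "(\<lambda>c. mu c * G c) summable_on I"
  proof (rule summable_on_comparison_test[OF has_sum_imp_summable[OF hmu]])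
    fix c assume c: "c \<in> I"
    show "mu c * G c \<le> mu c" by (rule mult_right_le_one_le) (use mu[OF c] G0[OF c] G1[OF c] in auto)
    show "0 \<le> mu c * G c" using mu G0 c by simp
  qed
  then obtain C where hC: "((\<lambda>c. mu c * G c) has_sum C) I" using summable_on_def by blast
  define Mx where "Mx = (SUP c\<in>I. G c)"
  define mn where "mn = (INF c\<in>I. G c)"
  have bddA: "bdd_above (G ` I)" using G1 by (intro bdd_aboveI2) auto
  have bddB: "bdd_below (G ` I)" using G0 by (intro bdd_belowI2) auto
  have GM: "G c \<le> Mx" if "c \<in> I" for c unfolding Mx_def by (rule cSUP_upper[OF that bddA])
  have Gm: "mn \<le> G c" if "c \<in> I" for c unfolding mn_def by (rule cINF_lower[OF bddB that])
  have "Mx - D \<le> mn"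
  proof -
    have "Mx \<le> G c' + D" if c': "c' \<in> I" for c'
      unfolding Mx_def
    proof (rule cSUP_least[OF ne])
      fix c assume c: "c \<in> I" then show "G c \<le> G c' + D" using D[OF c c'] by linarith
    qed
    then have "Mx - D \<le> G c'" if "c' \<in> I" for c' using that by (metis diff_le_eq)
    then show ?thesis unfolding mn_def by (rule cINF_greatest[OF ne])
  qed
  have SSm: "Sm \<le> S" by (rule has_sum_mono[OF hmu hw]) (use mu in blast)
  have h1: "((\<lambda>c. (w c - mu c) * G c) has_sum (A - C)) I"
    using has_sum_diff'[OF hA hC] by (simp add: algebra_simps)
  have h1': "((\<lambda>c. (w' c - mu c) * G c) has_sum (A' - C)) I"
    using has_sum_diff'[OF hA' hC] by (simp add: algebra_simps)
  have h2: "((\<lambda>c. (w c - mu c) * Mx) has_sum ((S - Sm) * Mx)) I"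
    by (intro has_sum_cmult_left has_sum_diff' hw hmu)
  have h2': "((\<lambda>c. (w' c - mu c) * mn) has_sum ((S - Sm) * mn)) I"
    by (intro has_sum_cmult_left has_sum_diff' hw' hmu)
  have "A - C \<le> (S - Sm) * Mx"
  proof (rule has_sum_mono[OF h1 h2])
    fix c assume c: "c \<in> I"
    show "(w c - mu c) * G c \<le> (w c - mu c) * Mx" using mu[OF c] GM[OF c] by (intro mult_left_mono) auto
  qed
  moreover have "(S - Sm) * mn \<le> A' - C"
  proof (rule has_sum_mono[OF h2' h1'])
    fix c assume c: "c \<in> I"
    show "(w' c - mu c) * mn \<le> (w' c - mu c) * G c" using mu[OF c] Gm[OF c] by (intro mult_left_mono) auto
  qed
  ultimately have "A - A' \<le> (S - Sm) * (Mx - mn)" by (simp add: algebra_simps)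
  also have "\<dots> \<le> (S - Sm) * D" using SSm \<open>Mx - D \<le> mn\<close> by (intro mult_left_mono) auto
  finally show ?thesis .
qed



lemma stepA:
  assumes TA: "qsp_typeA P x0" and mn: "m+1 < n" and k: "k \<in> Npos" and k0: "k0 \<in> Npos"
    and minor: "\<And>i j. i\<in>Npos \<Longrightarrow> j\<in>Npos \<Longrightarrow> L \<le> P m (m+1) i j k0"
    and L0: "0 \<le> L"
    and IH: "\<And>i j u. i\<in>Npos \<Longrightarrow> j\<in>Npos \<Longrightarrow> u\<in>Npos \<Longrightarrow> \<bar>P (m+1) n i j k - P (m+1) n u j k\<bar> \<le> B"
    and ij: "i \<in> Npos" "j \<in> Npos" "u \<in> Npos"
  shows "P m n i j k - P m n u j k \<le> (1 - L) * B"
proof -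
  have bas: "qsp_basic P x0" using TA unfolding qsp_typeA_def by blast
  define r where "r = m + 1"
  define x where "x = qsp_state P x0 r"
  have x0: "\<And>l. l \<in> Npos \<Longrightarrow> 0 \<le> x l" and hx: "(x has_sum 1) Npos"
    using state_prob[OF bas, of r] unfolding x_def by auto
  have rn: "r < n" "m < r" using mn r_def by auto
  define G where "G a = infsum (\<lambda>l. P r n a l k * x l) Npos" for a
  have hG: "((\<lambda>l. P r n a l k * x l) has_sum G a) Npos" if a: "a \<in> Npos" for a
  proof -
    have "(\<lambda>l. P r n a l k * x l) summable_on Npos"
      by (rule summable_on_comparison_test[OF has_sum_imp_summable[OF hx]])
        (use x0 basic_bounds[OF bas rn(1) a _ k] in \<open>auto intro: mult_left_le_one_le mult_nonneg_nonneg\<close>)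
    then show ?thesis unfolding G_def by simp
  qed
  have G01: "0 \<le> G a \<and> G a \<le> 1" if a: "a \<in> Npos" for a
  proof
    show "0 \<le> G a" by (rule has_sum_nonneg[OF hG[OF a]])
        (use x0 basic_bounds[OF bas rn(1) a _ k] in auto)
    show "G a \<le> 1" by (rule has_sum_mono[OF hG[OF a] hx])
        (use x0 basic_bounds[OF bas rn(1) a _ k] in \<open>auto intro: mult_left_le_one_le\<close>)
  qed
  have hP: "((\<lambda>a. P m r i j a * G a) has_sum P m n i j k) Npos" if "i \<in> Npos" "j \<in> Npos" for i j
  proof (rule has_sum_Sigma')
    show "((\<lambda>(a,l). P m r i j a * P r n a l k * x l) has_sum P m n i j k) (Npos \<times> Npos)"
      using TA rn that k unfolding qsp_typeA_def x_def by blast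
    show "((\<lambda>l. (\<lambda>(a,l). P m r i j a * P r n a l k * x l) (a, l)) has_sum P m r i j a * G a) Npos"
      if "a \<in> Npos" for a
      using has_sum_cmult_right[OF hG[OF that], of "P m r i j a"] by (simp add: mult.assoc)
  qed
  have "P m n i j k - P m n u j k \<le> (1 - L) * B"
  proof (rule contract[where I=Npos and mu="\<lambda>a. if a = k0 then L else 0"])
    show "\<And>c. c \<in> Npos \<Longrightarrow> 0 \<le> (if c = k0 then L else 0) \<and> (if c = k0 then L else 0) \<le> P m r i j c \<and> (if c = k0 then L else 0) \<le> P m r u j c"
      using minor ij L0 basic_bounds(1)[OF bas rn(2)] unfolding r_def by auto
    show "(P m r i j has_sum 1) Npos" "(P m r u j has_sum 1) Npos"
      using basic_bounds(4)[OF bas rn(2)] ij k by auto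
    show "((\<lambda>a. if a = k0 then L else 0) has_sum L) Npos"
      by (rule has_sum_finite_neutralI[of "{k0}"]) (use k0 in auto)
    show "((\<lambda>c. P m r i j c * G c) has_sum P m n i j k) Npos" using hP ij by auto
    show "((\<lambda>c. P m r u j c * G c) has_sum P m n u j k) Npos" using hP ij by auto
    show "G c - G c' \<le> B" if c: "c \<in> Npos" "c' \<in> Npos" for c c'
    proof -
      have hB: "((\<lambda>l. B * x l) has_sum B) Npos" using has_sum_cmult_right[OF hx, of B] by simp
      show ?thesis
      proof (rule has_sum_mono[OF has_sum_diff'[OF hG[OF c(1)] hG[OF c(2)]] hB])
      fix l assume l: "l \<in> Npos"
      have "P r n c l k - P r n c' l k \<le> B" using IH[OF c(1) l c(2)] unfolding r_def by auto
      then have "(P r n c l k - P r n c' l k) * x l \<le> B * x l"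
        using x0[OF l] by (rule mult_right_mono)
      then show "P r n c l k * x l - P r n c' l k * x l \<le> B * x l" by (simp add: algebra_simps)
    qed
    qed
    show "\<And>c. c \<in> Npos \<Longrightarrow> 0 \<le> G c" "\<And>c. c \<in> Npos \<Longrightarrow> G c \<le> 1" using G01 by auto
    show "Npos \<noteq> {}" using k by auto
  qed
  then show ?thesis .
qed



lemma stepB:
  assumes TB: "qsp_typeB P x0" and mn: "m+1 < n" and k: "k \<in> Npos" and k0: "k0 \<in> Npos"
    and minor: "\<And>i j. i\<in>Npos \<Longrightarrow> j\<in>Npos \<Longrightarrow> L \<le> P m (m+1) i j k0"
    and L0: "0 \<le> L"
    and IH: "\<And>i j u. i\<in>Npos \<Longrightarrow> j\<in>Npos \<Longrightarrow> u\<in>Npos \<Longrightarrow> \<bar>P (m+1) n i j k - P (m+1) n u j k\<bar> \<le> B"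
    and ij: "i \<in> Npos" "j \<in> Npos" "u \<in> Npos"
  shows "P m n i j k - P m n u j k \<le> (1 - L) * B"
proof -
  have bas: "qsp_basic P x0" using TB unfolding qsp_typeB_def by (rule conjunct1)
  define r where "r = m + 1"
  define x where "x = qsp_state P x0 m"
  have x0: "\<And>l. l \<in> Npos \<Longrightarrow> 0 \<le> x l" and hx: "(x has_sum 1) Npos"
    using state_prob[OF bas, of m] unfolding x_def by auto
  have rn: "r < n" "m < r" using mn r_def by auto
  have P1: "0 \<le> P m r a b c" "P m r a b c \<le> 1" if "a \<in> Npos" "b \<in> Npos" "c \<in> Npos" for a b c
    using basic_bounds(1,2)[OF bas rn(2) that] by auto
  have P2: "0 \<le> P r n a b c" "P r n a b c \<le> 1" if "a \<in> Npos" "b \<in> Npos" "c \<in> Npos" for a b c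
    using basic_bounds(1,2)[OF bas rn(1) that] by auto
  define W where "W j' p = P m r j' (fst p) (snd p) * x (fst p)" for j' p
  have W0: "0 \<le> W j' p" if "j' \<in> Npos" "p \<in> Npos \<times> Npos" for j' p
    unfolding W_def using P1(1)[of j' "fst p" "snd p"] x0[of "fst p"] that by auto
  have hW: "(W j' has_sum 1) (Npos \<times> Npos)" if j': "j' \<in> Npos" for j'
  proof (rule tonelli[where g=x, OF _ _ hx])
    show "0 \<le> W j' (a, b)" if "a \<in> Npos" "b \<in> Npos" for a b using W0[OF j'] that by auto
    show "((\<lambda>b. W j' (a, b)) has_sum x a) Npos" if a: "a \<in> Npos" for a
      using has_sum_cmult_left[OF basic_bounds(4)[OF bas rn(2) j' a k], where c="x a"]
      unfolding W_def by simp
  qed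
  define G where "G l = infsum (\<lambda>p. W j p * P r n l (snd p) k) (Npos \<times> Npos)" for l
  have hG: "((\<lambda>p. W j p * P r n l (snd p) k) has_sum G l) (Npos \<times> Npos)" if l: "l \<in> Npos" for l
  proof -
    have "(\<lambda>p. W j p * P r n l (snd p) k) summable_on (Npos \<times> Npos)"
    proof (rule summable_on_comparison_test[OF has_sum_imp_summable[OF hW[OF ij(2)]]])
      fix p assume p: "p \<in> Npos \<times> Npos"
      have a: "0 \<le> W j p" using W0[OF ij(2) p] .
      have b: "0 \<le> P r n l (snd p) k" "P r n l (snd p) k \<le> 1" using P2[OF l _ k, of "snd p"] p by auto
      show "W j p * P r n l (snd p) k \<le> W j p" by (rule mult_right_le_one_le[OF a b])
      show "0 \<le> W j p * P r n l (snd p) k" using a b by simp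
    qed
    then show ?thesis unfolding G_def by simp
  qed
  have G01: "0 \<le> G l \<and> G l \<le> 1" if l: "l \<in> Npos" for l
  proof
    show "0 \<le> G l"
    proof (rule has_sum_nonneg[OF hG[OF l]])
      fix p assume p: "p \<in> Npos \<times> Npos"
      show "0 \<le> W j p * P r n l (snd p) k" using W0[OF ij(2) p] P2[OF l _ k, of "snd p"] p by auto
    qed
    show "G l \<le> 1"
    proof (rule has_sum_mono[OF hG[OF l] hW[OF ij(2)]])
      fix p assume p: "p \<in> Npos \<times> Npos"
      have a: "0 \<le> W j p" using W0[OF ij(2) p] .
      have b: "0 \<le> P r n l (snd p) k" "P r n l (snd p) k \<le> 1" using P2[OF l _ k, of "snd p"] p by auto
      show "W j p * P r n l (snd p) k \<le> W j p" by (rule mult_right_le_one_le[OF a b])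
    qed
  qed
  have hP: "((\<lambda>c. W i' c * G (snd c)) has_sum P m n i' j k) (Npos \<times> Npos)" if i': "i' \<in> Npos" for i'
  proof -
    define F where "F = (\<lambda>(a,l,g,h). P m r i' a l * P m r j g h * P r n l h k * x a * x g)"
    have hF: "(F has_sum P m n i' j k) (Npos \<times> Npos \<times> Npos \<times> Npos)"
      using TB rn i' ij(2) k unfolding qsp_typeB_def F_def x_def r_def by blast
    define F' where "F' q = W i' (fst q) * (W j (snd q) * P r n (snd (fst q)) (snd (snd q)) k)" for q
    have "(F has_sum P m n i' j k) (Npos \<times> Npos \<times> Npos \<times> Npos) =
          (F' has_sum P m n i' j k) ((Npos \<times> Npos) \<times> (Npos \<times> Npos))"
      by (rule has_sum_reindex_bij_witness[where j="\<lambda>(a,l,g,h). ((a,l),(g,h))"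
            and i="\<lambda>q. (fst (fst q), snd (fst q), fst (snd q), snd (snd q))"])
         (auto simp: F_def F'_def W_def mult_ac)
    with hF have hF': "(F' has_sum P m n i' j k) ((Npos \<times> Npos) \<times> (Npos \<times> Npos))" by blast
    show ?thesis
    proof (rule has_sum_Sigma'[where f=F', OF hF'])
      fix c assume c: "c \<in> Npos \<times> Npos"
      show "((\<lambda>y. F' (c, y)) has_sum W i' c * G (snd c)) (Npos \<times> Npos)"
        using has_sum_cmult_right[OF hG[of "snd c"], where c="W i' c"] c unfolding F'_def by auto
    qed
  qed
  show ?thesis
  proof (rule contract[where I="Npos \<times> Npos" and w="W i" and w'="W u" and G="\<lambda>c. G (snd c)"
        and mu="\<lambda>c. if snd c = k0 then L * x (fst c) else 0" and S=1 and Sm=L])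
    fix c assume c: "c \<in> Npos \<times> Npos"
    show "0 \<le> (if snd c = k0 then L * x (fst c) else 0) \<and> (if snd c = k0 then L * x (fst c) else 0) \<le> W i c \<and> (if snd c = k0 then L * x (fst c) else 0) \<le> W u c"
    proof (cases "snd c = k0")
      case True
      have xa: "0 \<le> x (fst c)" using x0 c by auto
      have "L * x (fst c) \<le> W i c" unfolding W_def True r_def
        using minor[OF ij(1), of "fst c"] c xa by (intro mult_right_mono) auto
      moreover have "L * x (fst c) \<le> W u c" unfolding W_def True r_def
        using minor[OF ij(3), of "fst c"] c xa by (intro mult_right_mono) auto
      ultimately show ?thesis using True L0 xa by simp
    next
      case False
      then show ?thesis using W0[OF ij(1) c] W0[OF ij(3) c] by simp
    qed
  next
    show "(W i has_sum 1) (Npos \<times> Npos)" "(W u has_sum 1) (Npos \<times> Npos)" using hW ij by auto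
  next
    show "((\<lambda>c. if snd c = k0 then L * x (fst c) else 0) has_sum L) (Npos \<times> Npos)"
    proof (rule tonelli[where g="\<lambda>a. L * x a"])
      show "0 \<le> (if snd (a, b) = k0 then L * x (fst (a, b)) else 0)" if "a \<in> Npos" "b \<in> Npos" for a b
        using L0 x0 that by auto
      show "((\<lambda>b. if snd (a, b) = k0 then L * x (fst (a, b)) else 0) has_sum L * x a) Npos" for a
        by (rule has_sum_finite_neutralI[of "{k0}"]) (use k0 in auto)
      show "((\<lambda>a. L * x a) has_sum L) Npos" using has_sum_cmult_right[OF hx, where c=L] by simp
    qed
  next
    show "((\<lambda>c. W i c * G (snd c)) has_sum P m n i j k) (Npos \<times> Npos)" using hP ij by auto
    show "((\<lambda>c. W u c * G (snd c)) has_sum P m n u j k) (Npos \<times> Npos)" using hP ij by auto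
  next
    fix c c' assume c: "c \<in> Npos \<times> Npos" and c': "c' \<in> Npos \<times> Npos"
    have l: "snd c \<in> Npos" and l': "snd c' \<in> Npos" using c c' by auto
    have hB: "((\<lambda>p. W j p * B) has_sum B) (Npos \<times> Npos)"
      using has_sum_cmult_left[OF hW[OF ij(2)], where c=B] by simp
    show "G (snd c) - G (snd c') \<le> B"
    proof (rule has_sum_mono[OF has_sum_diff'[OF hG[OF l] hG[OF l']] hB])
      fix p assume p: "p \<in> Npos \<times> Npos"
      have "P r n (snd c) (snd p) k - P r n (snd c') (snd p) k \<le> B"
        using IH[OF l _ l', of "snd p"] p unfolding r_def by auto
      then have "W j p * (P r n (snd c) (snd p) k - P r n (snd c') (snd p) k) \<le> W j p * B"
        using W0[OF ij(2) p] by (rule mult_left_mono)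
      then show "W j p * P r n (snd c) (snd p) k - W j p * P r n (snd c') (snd p) k \<le> W j p * B"
        by (simp add: algebra_simps)
    qed
  next
    fix c assume c: "c \<in> Npos \<times> Npos"
    then show "0 \<le> G (snd c)" "G (snd c) \<le> 1" using G01[of "snd c"] by auto
  next
    show "Npos \<times> Npos \<noteq> {}" using k by auto
  qed
qed


lemma main_bound:
  fixes P :: "nat \<Rightarrow> nat \<Rightarrow> nat \<Rightarrow> nat \<Rightarrow> nat \<Rightarrow> real" and lam :: "nat \<Rightarrow> real"
  assumes T: "qsp_typeA P x0 \<or> qsp_typeB P x0" and k0: "k0 \<in> Npos" and k: "k \<in> Npos"
    and lam: "\<And>n. n \<ge> 1 \<Longrightarrow> 0 < lam n \<and> lam n < 1"
    and minor: "\<And>n i j. n \<ge> 1 \<Longrightarrow> i \<ge> 1 \<Longrightarrow> j \<ge> 1 \<Longrightarrow> P (n - 1) n i j k0 \<ge> lam n"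
  shows "\<forall>m. \<forall>i\<in>Npos. \<forall>j\<in>Npos. \<forall>u\<in>Npos. \<bar>P m (m + Suc d) i j k - P m (m + Suc d) u j k\<bar>
           \<le> (\<Prod>q=1..m+d. 1 - lam q) / (\<Prod>q=1..m. 1 - lam q)"
proof -
  have bas: "qsp_basic P x0" using T unfolding qsp_typeA_def qsp_typeB_def by blast
  define Pi where "Pi t = (\<Prod>q=1..t. 1 - lam q)" for t
  have Pipos: "0 < Pi t" for t unfolding Pi_def using lam by (intro prod_pos) auto
  have PiS: "Pi (Suc t) = Pi t * (1 - lam (Suc t))" for t
    unfolding Pi_def by (subst prod.nat_ivl_Suc') auto
  have "\<forall>m. \<forall>i\<in>Npos. \<forall>j\<in>Npos. \<forall>u\<in>Npos. \<bar>P m (m + Suc d) i j k - P m (m + Suc d) u j k\<bar>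
           \<le> Pi (m+d) / Pi m"
  proof (induction d)
    case 0
    show ?case
    proof (intro allI ballI)
      fix m i j u assume ij: "i \<in> Npos" "j \<in> Npos" "u \<in> Npos"
      have "m < m + Suc 0" by simp
      note b1 = basic_bounds(1,2)[OF bas this ij(1,2) k] and b2 = basic_bounds(1,2)[OF bas this ij(3,2) k]
      have "Pi (m + 0) / Pi m = 1" using Pipos[of m] by simp
      then show "\<bar>P m (m + Suc 0) i j k - P m (m + Suc 0) u j k\<bar> \<le> Pi (m + 0) / Pi m"
        using b1 b2 by linarith
    qed
  next
    case (Suc d)
    show ?case
    proof (intro allI ballI)
      fix m i j u assume ij: "i \<in> Npos" "j \<in> Npos" "u \<in> Npos"
      define n where "n = m + Suc (Suc d)"
      define B where "B = Pi (Suc m + d) / Pi (Suc m)"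
      have IH: "\<bar>P (m+1) n i j k - P (m+1) n u j k\<bar> \<le> B"
        if "i \<in> Npos" "j \<in> Npos" "u \<in> Npos" for i j u
      proof -
        have e: "Suc m + Suc d = n" "m + 1 = Suc m" unfolding n_def by simp_all
        have "\<bar>P (Suc m) (Suc m + Suc d) i j k - P (Suc m) (Suc m + Suc d) u j k\<bar> \<le> B"
          using Suc.IH that unfolding B_def by blast
        then show ?thesis unfolding e .
      qed
      have mi: "lam (m+1) \<le> P m (m+1) i j k0" if "i \<in> Npos" "j \<in> Npos" for i j
        using minor[of "m+1" i j] that by (simp add: Npos_def)
      have L0: "0 \<le> lam (m+1)" using lam[of "m+1"] by simp
      have mn: "m + 1 < n" unfolding n_def by simp
      have d1: "P m n i j k - P m n u j k \<le> (1 - lam (m+1)) * B"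
      proof (cases "qsp_typeA P x0")
        case True
        show ?thesis by (rule stepA[OF True mn k k0 mi L0 IH ij])
      next
        case False
        then have TB: "qsp_typeB P x0" using T by blast
        show ?thesis by (rule stepB[OF TB mn k k0 mi L0 IH ij])
      qed
      have d2: "P m n u j k - P m n i j k \<le> (1 - lam (m+1)) * B"
      proof (cases "qsp_typeA P x0")
        case True
        show ?thesis by (rule stepA[OF True mn k k0 mi L0 IH ij(3,2,1)])
      next
        case False
        then have TB: "qsp_typeB P x0" using T by blast
        show ?thesis by (rule stepB[OF TB mn k k0 mi L0 IH ij(3,2,1)])
      qed
      have "(1 - lam (m+1)) * B = Pi (m + Suc d) / Pi m"
      proof -
        have ne: "1 - lam (m+1) \<noteq> 0" using lam[of "m+1"] by simp
        have "Suc m + d = m + Suc d" by simp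
        then show ?thesis unfolding B_def PiS using ne Pipos[of m]
          by (simp add: field_simps)
      qed
      then show "\<bar>P m (m + Suc (Suc d)) i j k - P m (m + Suc (Suc d)) u j k\<bar> \<le> Pi (m + Suc d) / Pi m"
        using d1 d2 unfolding n_def by linarith
    qed
  qed
  then show ?thesis unfolding Pi_def .
qed

theorem theorem3p4:
  fixes P :: "nat \<Rightarrow> nat \<Rightarrow> nat \<Rightarrow> nat \<Rightarrow> nat \<Rightarrow> real"
    and x0 :: "nat \<Rightarrow> real" and lam :: "nat \<Rightarrow> real" and k0 :: nat
  assumes "qsp_typeA P x0 \<or> qsp_typeB P x0"
    and "k0 \<ge> 1"
    and "\<And>n. n \<ge> 1 \<Longrightarrow> 0 < lam n \<and> lam n < 1"
    and "\<not> summable (\<lambda>n. lam (Suc n))"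
    and "(\<lambda>n. \<Sum>j=1..n. (\<Prod>k=1..n. 1 - lam k) / (1 - lam j)) \<longlonglongrightarrow> 0"
    and "\<And>n i j. n \<ge> 1 \<Longrightarrow> i \<ge> 1 \<Longrightarrow> j \<ge> 1 \<Longrightarrow> P (n - 1) n i j k0 \<ge> lam n"
  shows "ergodic_principle P"
proof -
  note T = assms(1) and lam = assms(3) and minor = assms(6)
  have bas: "qsp_basic P x0" using T unfolding qsp_typeA_def qsp_typeB_def by blast
  have k0: "k0 \<in> Npos" using assms(2) by (simp add: Npos_def)
  define Pi where "Pi t = (\<Prod>q=1..t. 1 - lam q)" for t
  have Pipos: "0 < Pi t" for t unfolding Pi_def using lam by (intro prod_pos) auto
  have Pi0: "Pi \<longlonglongrightarrow> 0"
  proof (rule tendsto_sandwich[OF _ _ tendsto_const assms(5)])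
    show "\<forall>\<^sub>F n in sequentially. 0 \<le> Pi n" using Pipos by (simp add: less_imp_le)
    show "\<forall>\<^sub>F n in sequentially. Pi n \<le> (\<Sum>j=1..n. (\<Prod>k=1..n. 1 - lam k) / (1 - lam j))"
    proof (rule eventually_sequentiallyI[of 1])
      fix n :: nat assume n: "1 \<le> n"
      have l1: "0 < 1 - lam 1" "1 - lam 1 \<le> 1" using lam[of 1] by auto
      have "Pi n * (1 - lam 1) \<le> Pi n" using Pipos[of n] l1 by (intro mult_right_le_one_le) auto
      then have "Pi n \<le> Pi n / (1 - lam 1)" using l1 by (simp add: le_divide_eq)
      also have "\<dots> \<le> (\<Sum>j=1..n. Pi n / (1 - lam j))"
      proof (rule member_le_sum)
        show "1 \<in> {1..n}" using n by simp
        show "0 \<le> Pi n / (1 - lam j)" if "j \<in> {1..n} - {1}" for j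
          using Pipos[of n] lam[of j] that by (intro divide_nonneg_nonneg) auto
      qed simp
      finally show "Pi n \<le> (\<Sum>j=1..n. (\<Prod>k=1..n. 1 - lam k) / (1 - lam j))" unfolding Pi_def .
    qed
  qed
  show ?thesis
    unfolding ergodic_principle_def
  proof (intro ballI allI)
    fix i j u v k m assume ij: "i \<in> Npos" "j \<in> Npos" "u \<in> Npos" "v \<in> Npos" and k: "k \<in> Npos"
    have MB: "\<forall>m. \<forall>i\<in>Npos. \<forall>j\<in>Npos. \<forall>u\<in>Npos. \<bar>P m (m + Suc d) i j k - P m (m + Suc d) u j k\<bar>
           \<le> Pi (m+d) / Pi m" for d
      using main_bound[OF T k0 k lam minor] unfolding Pi_def by blast
    have ev: "\<forall>\<^sub>F n in sequentially. norm \<bar>P m n i j k - P m n u v k\<bar> \<le> 2 * Pi (n - 1) / Pi m"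
    proof (rule eventually_sequentiallyI[of "Suc m"])
      fix n assume n: "Suc m \<le> n"
      define d where "d = n - Suc m"
      have nd: "n = m + Suc d" and nd1: "n - 1 = m + d" using n unfolding d_def by auto
      have mn: "m < n" using n by simp
      have "\<bar>P m (m + Suc d) i j k - P m (m + Suc d) u j k\<bar> \<le> Pi (m + d) / Pi m"
        using MB[of d] ij by blast
      then have a1: "\<bar>P m n i j k - P m n u j k\<bar> \<le> Pi (n - 1) / Pi m"
        unfolding nd1 by (simp add: nd)
      have "\<bar>P m (m + Suc d) j u k - P m (m + Suc d) v u k\<bar> \<le> Pi (m + d) / Pi m"
        using MB[of d] ij by blast
      then have a2: "\<bar>P m n j u k - P m n v u k\<bar> \<le> Pi (n - 1) / Pi m"
        unfolding nd1 by (simp add: nd)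
      have s1: "P m n u j k = P m n j u k" using basic_bounds(3)[OF bas mn ij(3,2) k] .
      have s2: "P m n u v k = P m n v u k" using basic_bounds(3)[OF bas mn ij(3,4) k] .
      show "norm \<bar>P m n i j k - P m n u v k\<bar> \<le> 2 * Pi (n - 1) / Pi m"
        using a1 a2 s1 s2 by (simp add: abs_le_iff)
    qed
    have "(\<lambda>n. Pi (n - 1)) \<longlonglongrightarrow> 0"
      by (rule LIMSEQ_imp_Suc) (use Pi0 in simp)
    then have "(\<lambda>n. (2 / Pi m) * Pi (n - 1)) \<longlonglongrightarrow> (2 / Pi m) * 0"
      by (rule tendsto_mult[OF tendsto_const])
    then have "(\<lambda>n. 2 * Pi (n - 1) / Pi m) \<longlonglongrightarrow> 0" by simp
    then show "(\<lambda>n. \<bar>P m n i j k - P m n u v k\<bar>) \<longlonglongrightarrow> 0"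
      by (rule Lim_null_comparison[OF ev])
  qed
qed

end
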